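(* With the relaxed barrier functions $\hat B_x$, $\hat B_u$, $\hat B_f$ and the numbers $\bar\beta_x(\delta)$, $\bar\beta_u(\delta)$, $\bar\beta_f(\delta)$ defined in the context, it holds that $\{x\in\mathbb{R}^n:\hat B_x(x)\le\bar\beta_x(\delta)\}\subseteq\mathcal{X}$, $\{u\in\mathbb{R}^m:\hat B_u(u)\le\bar\beta_u(\delta)\}\subseteq\mathcal{U}$, and $\{x\in\mathbb{R}^n:\hat B_f(x)\le\bar\beta_f(\delta)\}\subseteq\mathcal{X}_f$.
   Context: Constraint sets are (compact) polytopes $\mathcal{X}=\{x\in\mathbb{R}^n: C_xx\le d_x\}$, $\mathcal{U}=\{u\in\mathbb{R}^m: C_uu\le d_u\}$ with $C_x\in\mathbb{R}^{q_x\times n}$, $C_u\in\mathbb{R}^{q_u\times m}$, and $d_x,d_u$ with strictly positive entries; $C^i$ is the $i$-th row, $d^i$ the $i$-th entry. Relaxed logarithmic barrier: fix $\delta\in(0,1]$. The relaxing function $\beta(\cdot;\delta):(-\infty,\delta]\to\mathbb{R}$ is either $\beta_k(z;\delta)=\frac{k-1}{k}\big[\big(\frac{z-k\delta}{(k-1)\delta}\big)^k-1\big]-\ln\delta$ for some even integer $k\ge2$, or $\beta_e(z;\delta)=\exp(1-z/\delta)-1-\ln\delta$. Define $\hat B(z)=-\ln z$ for $z>\delta$ and $\hat B(z)=\beta(z;\delta)$ for $z\le\delta$. Relaxed recentered barriers: with $z_x^i(x)=-C_x^ix+d_x^i$, $\hat B_x(x)=\sum_{i=1}^{q_x}\hat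 B_{x,i}(x)$ where either (gradient recentering) $\hat B_{x,i}(x)=\hat B(z_x^i(x))+\ln d_x^i-C_x^ix/d_x^i$ for all $i$, or (weight recentering) $\hat B_{x,i}(x)=(1+w_x^i)(\hat B(z_x^i(x))+\ln d_x^i)$ with a vector $w_x\ge0$ satisfying $\sum_i(1+w_x^i)(C_x^i)^\top/d_x^i=0$; $\hat B_u$ is defined analogously from $C_u,d_u$ (and a weight vector $w_u$). $\delta$ is such that $\hat B_x(0)=\hat B_u(0)=0$ and $\nabla\hat B_x(0)=0$, $\nabla\hat B_u(0)=0$. Terminal set: $\mathcal{X}_f=\{x\in\mathbb{R}^n:\varphi(x)\le1\}$ where $\varphi:\mathbb{R}^n\to\mathbb{R}_{\ge0}$ is continuously differentiable, convex and positive definite, and $\varphi(A_Kx)\le\varphi(x)$ for all $x\in\mathcal{X}_f$, with $A_K=A+BK$ for a given gain $K$. The relaxed terminal barrier is $\hat B_f(x)=\hat B(1-\varphi(x))$, i.e. $-\ln(1-\varphi(x))$ if $1-\varphi(x)>\delta$ and $\beta(1-\varphi(x);\delta)$ otherwise. Define $\bar\beta_f(\delta)=\beta(0;\delta)$, $\bar\beta_x(\delta)=\min\{\hat B_x(x): x\in\mathbb{R}^n,\ C_x^ix=d_x^i$ for some $i\in\{1,\dots,q_x\}\}$ and $\bar\beta_u(\delta)=\min\{\hat B_u(u): C_u^ju=d_u^j$ for some $j\in\{1,\dots,q_u\}\}$. *)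

theory Defs
  imports "HOL-Analysis.Analysis"
begin

definition beta_k :: "nat \<Rightarrow> real \<Rightarrow> real \<Rightarrow> real" where
  "beta_k k \<delta> z = (real k - 1) / real k * (((z - real k * \<delta>) / ((real k - 1) * \<delta>)) ^ k - 1) - ln \<delta>"

definition beta_e :: "real \<Rightarrow> real \<Rightarrow> real" where
  "beta_e \<delta> z = exp (1 - z / \<delta>) - 1 - ln \<delta>"

definition relaxing_fn :: "(real \<Rightarrow> real) \<Rightarrow> real \<Rightarrow> bool" where
  "relaxing_fn \<beta> \<delta> \<longleftrightarrow> (\<exists>k. even k \<and> k \<ge> 2 \<and> \<beta> = beta_k k \<delta>) \<or> \<beta> = beta_e \<delta>"

definition hatB :: "(real \<Rightarrow> real) \<Rightarrow> real \<Rightarrow> real \<Rightarrow> real" where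
  "hatB \<beta> \<delta> z = (if z > \<delta> then - ln z else \<beta> z)"

definition polytope :: "real^'n^'q \<Rightarrow> real^'q \<Rightarrow> (real^'n) set" where
  "polytope C d = {x. \<forall>i. C $ i \<bullet> x \<le> d $ i}"

definition grad_recentered ::
  "(real \<Rightarrow> real) \<Rightarrow> real \<Rightarrow> real^'n^'q::finite \<Rightarrow> real^'q \<Rightarrow> real^'n \<Rightarrow> real" where
  "grad_recentered \<beta> \<delta> C d x =
     (\<Sum>i\<in>UNIV. hatB \<beta> \<delta> (d $ i - C $ i \<bullet> x) + ln (d $ i) - (C $ i \<bullet> x) / d $ i)"

definition weight_recentered ::
  "(real \<Rightarrow> real) \<Rightarrow> real \<Rightarrow> real^'n^'q::finite \<Rightarrow> real^'q \<Rightarrow> real^'q \<Rightarrow> real^'n \<Rightarrow> real" where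
  "weight_recentered \<beta> \<delta> C d w x =
     (\<Sum>i\<in>UNIV. (1 + w $ i) * (hatB \<beta> \<delta> (d $ i - C $ i \<bullet> x) + ln (d $ i)))"

definition admissible_weight :: "real^'n^'q::finite \<Rightarrow> real^'q \<Rightarrow> real^'q \<Rightarrow> bool" where
  "admissible_weight C d w \<longleftrightarrow>
     (\<forall>i. w $ i \<ge> 0) \<and> (\<Sum>i\<in>UNIV. ((1 + w $ i) / d $ i) *\<^sub>R (C $ i)) = 0"

definition relaxed_recentered_barrier ::
  "(real \<Rightarrow> real) \<Rightarrow> real \<Rightarrow> real^'n^'q::finite \<Rightarrow> real^'q \<Rightarrow> (real^'n \<Rightarrow> real) \<Rightarrow> bool" where
  "relaxed_recentered_barrier \<beta> \<delta> C d Bf \<longleftrightarrow>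
     Bf = grad_recentered \<beta> \<delta> C d \<or>
     (\<exists>w. admissible_weight C d w \<and> Bf = weight_recentered \<beta> \<delta> C d w)"

definition bar_beta :: "real^'n^'q \<Rightarrow> real^'q \<Rightarrow> (real^'n \<Rightarrow> real) \<Rightarrow> real" where
  "bar_beta C d Bf = (INF x\<in>{x. \<exists>i. C $ i \<bullet> x = d $ i}. Bf x)"

end

theory Submission
  imports Defs
begin


lemma betak_props:
  fixes \<delta> :: real and k :: nat
  assumes d: "0 < \<delta>" and k: "even k" "k \<ge> 2"
  defines "b' \<equiv> \<lambda>z. ((z - real k * \<delta>) / ((real k - 1) * \<delta>)) ^ (k - 1) / \<delta>"
  shows "\<forall>z. (beta_k k \<delta> has_real_derivative b' z) (at z)"
    and "beta_k k \<delta> \<delta> = - ln \<delta>"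
    and "b' \<delta> = -1/\<delta>"
    and "\<forall>y z. y < z \<longrightarrow> z \<le> \<delta> \<longrightarrow> b' y < b' z"
proof -
  have k1: "real k - 1 > 0" using k by simp
  have odd: "odd (k - 1)" using k by simp
  have ev: "\<delta> - real k * \<delta> = - ((real k - 1) * \<delta>)" by (simp add: algebra_simps)
  show "\<forall>z. (beta_k k \<delta> has_real_derivative b' z) (at z)"
  proof
    fix z
    define c where "c = (real k - 1) * \<delta>"
    have c0: "c > 0" unfolding c_def using k1 d by simp
    have du: "((\<lambda>z. (z - real k * \<delta>) / c) has_real_derivative 1 / c) (at z)"
      using c0 by (auto intro!: derivative_eq_intros)
    have dp: "((\<lambda>z. ((z - real k * \<delta>) / c) ^ k) has_real_derivative
        real k * ((z - real k * \<delta>) / c) ^ (k - 1) * (1 / c)) (at z)"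
      using DERIV_chain2[OF DERIV_pow[of k "(z - real k * \<delta>) / c"] du] by simp
    have "((\<lambda>z. (real k - 1) / real k * (((z - real k * \<delta>) / c) ^ k - 1) - ln \<delta>)
       has_real_derivative (real k - 1) / real k * (real k * ((z - real k * \<delta>) / c) ^ (k - 1) * (1 / c))) (at z)"
      using DERIV_diff[OF DERIV_cmult[OF DERIV_diff[OF dp DERIV_const[of 1]], of "(real k-1)/real k"] DERIV_const[of "ln \<delta>"]] by simp
    moreover have "(real k - 1) / real k * (real k * ((z - real k * \<delta>) / c) ^ (k - 1) * (1 / c)) = b' z"
      using k1 d k unfolding b'_def c_def by (simp add: field_simps)
    ultimately show "(beta_k k \<delta> has_real_derivative b' z) (at z)"
      unfolding beta_k_def[abs_def] c_def by simp
  qed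
  have m1: "(\<delta> - real k * \<delta>) / ((real k - 1) * \<delta>) = -1" using k1 d ev by simp
  show "beta_k k \<delta> \<delta> = - ln \<delta>" unfolding beta_k_def m1 using k by simp
  show "b' \<delta> = -1/\<delta>" unfolding b'_def m1 using odd by simp
  show "\<forall>y z. y < z \<longrightarrow> z \<le> \<delta> \<longrightarrow> b' y < b' z"
  proof (intro allI impI)
    fix y z :: real assume yz: "y < z" "z \<le> \<delta>"
    define u where "u = (\<lambda>z. (z - real k * \<delta>) / ((real k - 1) * \<delta>))"
    have "u y < u z" unfolding u_def using yz k1 d by (simp add: divide_strict_right_mono)
    moreover have "u z \<le> -1"
    proof -
      have "z - real k * \<delta> \<le> - ((real k - 1) * \<delta>)" using yz by (simp add: algebra_simps)
      thus ?thesis unfolding u_def using k1 d by (simp add: divide_simps)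
    qed
    ultimately have "(- u z) ^ (k-1) < (- u y) ^ (k-1)"
      using odd by (intro power_strict_mono) (auto simp: odd_pos)
    hence "u y ^ (k-1) < u z ^ (k-1)" using odd by simp
    thus "b' y < b' z" unfolding b'_def using d by (simp add: u_def divide_strict_right_mono)
  qed
qed

lemma betae_props:
  fixes \<delta> :: real
  assumes d: "0 < \<delta>"
  defines "b' \<equiv> \<lambda>z. - exp (1 - z / \<delta>) / \<delta>"
  shows "\<forall>z. (beta_e \<delta> has_real_derivative b' z) (at z)"
    and "beta_e \<delta> \<delta> = - ln \<delta>"
    and "b' \<delta> = -1/\<delta>"
    and "\<forall>y z. y < z \<longrightarrow> z \<le> \<delta> \<longrightarrow> b' y < b' z"
proof -
  show "\<forall>z. (beta_e \<delta> has_real_derivative b' z) (at z)"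
    unfolding beta_e_def[abs_def] b'_def using d
    by (auto intro!: derivative_eq_intros simp: field_simps)
  show "beta_e \<delta> \<delta> = - ln \<delta>" unfolding beta_e_def using d by simp
  show "b' \<delta> = -1/\<delta>" unfolding b'_def using d by simp
  show "\<forall>y z. y < z \<longrightarrow> z \<le> \<delta> \<longrightarrow> b' y < b' z"
  proof (intro allI impI)
    fix y z :: real assume yz: "y < z" "z \<le> \<delta>"
    have "1 - z/\<delta> < 1 - y/\<delta>" using yz d by (simp add: divide_strict_right_mono)
    hence "exp (1 - z/\<delta>) < exp (1 - y/\<delta>)" by simp
    thus "b' y < b' z" unfolding b'_def using d by (simp add: divide_strict_right_mono)
  qed
qed

lemma relax_props:
  assumes d: "0 < \<delta>" and r: "relaxing_fn \<beta> \<delta>"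
  shows "\<exists>b'. (\<forall>z. (\<beta> has_real_derivative b' z) (at z)) \<and> \<beta> \<delta> = - ln \<delta> \<and> b' \<delta> = -1/\<delta>
     \<and> (\<forall>y z. y < z \<longrightarrow> z \<le> \<delta> \<longrightarrow> b' y < b' z)"
  using r unfolding relaxing_fn_def
proof
  assume "\<exists>k. even k \<and> 2 \<le> k \<and> \<beta> = beta_k k \<delta>"
  then obtain k where "even k" "2 \<le> k" "\<beta> = beta_k k \<delta>" by blast
  thus ?thesis using betak_props[OF d, of k] by meson
next
  assume "\<beta> = beta_e \<delta>"
  thus ?thesis using betae_props[OF d] by meson
qed

lemma hatB_props:
  fixes \<delta> :: real and \<beta> b' :: "real \<Rightarrow> real"
  assumes d: "0 < \<delta>" and db: "\<forall>z. (\<beta> has_real_derivative b' z) (at z)"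
    and bd: "\<beta> \<delta> = - ln \<delta>" and b'd: "b' \<delta> = -1/\<delta>"
    and bm: "\<forall>y z. y < z \<longrightarrow> z \<le> \<delta> \<longrightarrow> b' y < b' z"
  defines "D \<equiv> \<lambda>z. if \<delta> < z then -1/z else b' z"
  shows "\<forall>z. (hatB \<beta> \<delta> has_real_derivative D z) (at z)"
    and "\<forall>y z. y < z \<longrightarrow> D y < D z"
proof -
  show "\<forall>z. (hatB \<beta> \<delta> has_real_derivative D z) (at z)"
  proof
    fix z :: real
    consider "\<delta> < z" | "z < \<delta>" | "z = \<delta>" by linarith
    thus "(hatB \<beta> \<delta> has_real_derivative D z) (at z)"
    proof cases
      case 1
      have "((\<lambda>z. - ln z) has_real_derivative -1/z) (at z)"
        using 1 d by (auto intro!: derivative_eq_intros simp: field_simps)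
      hence "(hatB \<beta> \<delta> has_real_derivative -1/z) (at z)"
        by (rule has_field_derivative_transform_within_open[where S="{\<delta><..}"])
           (use 1 in \<open>auto simp: hatB_def\<close>)
      thus ?thesis using 1 unfolding D_def by simp
    next
      case 2
      have "(hatB \<beta> \<delta> has_real_derivative b' z) (at z)"
        by (rule has_field_derivative_transform_within_open[OF db[rule_format], where S="{..<\<delta>}"])
           (use 2 in \<open>auto simp: hatB_def\<close>)
      thus ?thesis using 2 unfolding D_def by simp
    next
      case 3
      have l: "(hatB \<beta> \<delta> has_real_derivative -1/\<delta>) (at \<delta> within {..\<delta>})"
        apply (rule has_field_derivative_transform_within[where d=1])
        using has_field_derivative_at_within[OF db[rule_format, of \<delta>]] b'd
        by (auto simp: hatB_def)
      have "((\<lambda>z. - ln z) has_real_derivative -1/\<delta>) (at \<delta>)"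
        using d by (auto intro!: derivative_eq_intros simp: field_simps)
      hence r0: "((\<lambda>z. - ln z) has_real_derivative -1/\<delta>) (at \<delta> within {\<delta>..})"
        by (rule has_field_derivative_at_within)
      have r: "(hatB \<beta> \<delta> has_real_derivative -1/\<delta>) (at \<delta> within {\<delta>..})"
        by (rule has_field_derivative_transform_within[OF r0, where d=1]) (auto simp: hatB_def bd)
      have u: "{..\<delta>} \<union> {\<delta>..} = (UNIV :: real set)" by auto
      have "(hatB \<beta> \<delta> has_real_derivative -1/\<delta>) (at \<delta> within ({..\<delta>} \<union> {\<delta>..}))"
        using l r unfolding has_field_derivative_iff Lim_within_Un by blast
      thus ?thesis unfolding u D_def using 3 b'd by simp
    qed
  qed
  show "\<forall>y z. y < z \<longrightarrow> D y < D z"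
  proof (intro allI impI)
    fix y z :: real assume yz: "y < z"
    consider "z \<le> \<delta>" | "\<delta> < y" | "y \<le> \<delta>" "\<delta> < z" by linarith
    thus "D y < D z"
    proof cases
      case 1 thus ?thesis using bm yz unfolding D_def by auto
    next
      case 2 thus ?thesis using yz d unfolding D_def by (simp add: divide_strict_left_mono_neg frac_less2)
    next
      case 3
      have "b' y \<le> -1/\<delta>"
      proof (cases "y = \<delta>")
        case False thus ?thesis using bm[rule_format, of y \<delta>] 3 b'd by simp
      qed (use b'd in simp)
      also have "-1/\<delta> < -1/z" using 3 d by (simp add: frac_less2)
      finally show ?thesis using 3 yz unfolding D_def by simp
    qed
  qed
qed

lemma line_mono:
  fixes f F :: "real \<Rightarrow> real"
  assumes "\<forall>t. (f has_real_derivative F t) (at t)" "F 0 = 0"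
    and "\<forall>s t. s < t \<longrightarrow> F s \<le> F t" "0 \<le> s" "s \<le> t"
  shows "f s \<le> f t"
proof (cases "s = t")
  case False
  hence st: "s < t" using assms by simp
  obtain z where z: "s < z" "z < t" "f t - f s = (t - s) * F z"
    using MVT2[OF st, of f F] assms(1) by blast
  have "F z \<ge> 0" using assms(2,3,4) z by (metis order_le_less_trans)
  hence "(t - s) * F z \<ge> 0" using st by simp
  thus ?thesis using z by linarith
qed simp

lemma line_strict:
  fixes f F :: "real \<Rightarrow> real"
  assumes "\<forall>t. (f has_real_derivative F t) (at t)" "F 0 = 0"
    and "\<forall>s t. s < t \<longrightarrow> F s < F t" "0 \<le> s" "s < t"
  shows "f s < f t"
proof -
  obtain z where z: "s < z" "z < t" "f t - f s = (t - s) * F z"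
    using MVT2[OF assms(5), of f F] assms(1) by blast
  have "F z > 0" using assms(2,3,4) z by (metis order_le_less_trans)
  hence "(t - s) * F z > 0" using assms(5) by simp
  thus ?thesis using z by linarith
qed


lemma barrier_form:
  fixes C :: "real^'n::finite^'q::finite" and d :: "real^'q"
  assumes "relaxed_recentered_barrier \<beta> \<delta> C d Bf"
  shows "\<exists>c e g. (\<forall>i. c i > (0::real)) \<and>
    (\<forall>y. Bf y = (\<Sum>i\<in>UNIV. c i * hatB \<beta> \<delta> (d $ i - C $ i \<bullet> y) + e i + g i * (C $ i \<bullet> y)))"
  using assms unfolding relaxed_recentered_barrier_def
proof
  assume h: "Bf = grad_recentered \<beta> \<delta> C d"
  show ?thesis
    apply (rule exI[of _ "\<lambda>i. 1"], rule exI[of _ "\<lambda>i. ln (d $ i)"], rule exI[of _ "\<lambda>i. - 1 / d $ i"])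
    using h by (simp add: grad_recentered_def)
next
  assume "\<exists>w. admissible_weight C d w \<and> Bf = weight_recentered \<beta> \<delta> C d w"
  then obtain w where w: "\<forall>i. w $ i \<ge> 0" "Bf = weight_recentered \<beta> \<delta> C d w"
    unfolding admissible_weight_def by blast
  show ?thesis
    apply (rule exI[of _ "\<lambda>i. 1 + w $ i"], rule exI[of _ "\<lambda>i. (1 + w $ i) * ln (d $ i)"], rule exI[of _ "\<lambda>i. 0"])
    using w by (auto simp: weight_recentered_def algebra_simps add_pos_nonneg)
qed

lemma sublevel:
  fixes C :: "real^'n::finite^'q::finite" and d :: "real^'q" and Bf :: "real^'n \<Rightarrow> real"
    and c e g :: "'q \<Rightarrow> real" and D :: "real \<Rightarrow> real"
  assumes dpos: "\<forall>i. d $ i > 0" and cpos: "\<forall>i. c i > 0"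
    and form: "\<forall>y. Bf y = (\<Sum>i\<in>UNIV. c i * hatB \<beta> \<delta> (d $ i - C $ i \<bullet> y) + e i + g i * (C $ i \<bullet> y))"
    and hD: "\<forall>z. (hatB \<beta> \<delta> has_real_derivative D z) (at z)"
    and Dm: "\<forall>y z. y < z \<longrightarrow> D y < D z"
    and B0: "Bf 0 = 0" and der: "(Bf has_derivative (\<lambda>h. 0)) (at 0)"
  shows "{x. Bf x \<le> bar_beta C d Bf} \<subseteq> polytope C d"
proof -
  define F where "F x t = (\<Sum>i\<in>UNIV. c i * D (d $ i - t * (C $ i \<bullet> x)) * (- (C $ i \<bullet> x)) + g i * (C $ i \<bullet> x))" for x t
  have fd: "((\<lambda>t. Bf (t *\<^sub>R x)) has_real_derivative F x t) (at t)" for x t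
  proof -
    have "((\<lambda>t. (\<Sum>i\<in>UNIV. c i * hatB \<beta> \<delta> (d $ i - t * (C $ i \<bullet> x)) + e i + g i * (t * (C $ i \<bullet> x))))
       has_real_derivative F x t) (at t)"
      unfolding F_def
    proof (rule DERIV_sum)
      fix i
      have h1: "((\<lambda>t. d $ i - t * (C $ i \<bullet> x)) has_real_derivative - (C $ i \<bullet> x)) (at t)"
        by (auto intro!: derivative_eq_intros)
      have h2: "((\<lambda>t. hatB \<beta> \<delta> (d $ i - t * (C $ i \<bullet> x))) has_real_derivative D (d $ i - t * (C $ i \<bullet> x)) * - (C $ i \<bullet> x)) (at t)"
        by (rule DERIV_chain2[OF hD[rule_format] h1])
      have h3: "((\<lambda>t. g i * (t * (C $ i \<bullet> x))) has_real_derivative g i * (C $ i \<bullet> x)) (at t)"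
        by (auto intro!: derivative_eq_intros)
      show "((\<lambda>t. c i * hatB \<beta> \<delta> (d $ i - t * (C $ i \<bullet> x)) + e i + g i * (t * (C $ i \<bullet> x))) has_real_derivative
          c i * D (d $ i - t * (C $ i \<bullet> x)) * - (C $ i \<bullet> x) + g i * (C $ i \<bullet> x)) (at t)"
        using DERIV_add[OF DERIV_add[OF DERIV_cmult[OF h2, of "c i"] DERIV_const[of "e i"]] h3]
        by (simp add: mult.assoc)
    qed
    thus ?thesis using form by (simp add: inner_scaleR_right)
  qed
  have F0: "F x 0 = 0" for x
  proof -
    have "((\<lambda>t. t *\<^sub>R x) has_derivative (\<lambda>h. h *\<^sub>R x)) (at 0)"
      by (auto intro!: derivative_eq_intros)
    from has_derivative_compose[OF this, of Bf "\<lambda>h. 0"] der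
    have a: "((\<lambda>t. Bf (t *\<^sub>R x)) has_derivative (\<lambda>h. 0)) (at 0)" by simp
    have b: "((\<lambda>t. Bf (t *\<^sub>R x)) has_derivative (\<lambda>h. F x 0 * h)) (at 0)"
      using fd[of x 0] unfolding has_field_derivative_def by simp
    have "(\<lambda>h::real. F x 0 * h) = (\<lambda>h. 0)" by (rule has_derivative_unique[OF b a])
    from fun_cong[OF this, of 1] show ?thesis by simp
  qed
  have term_mono: "c i * D (d $ i - s * a) * (- a) \<le> c i * D (d $ i - t * a) * (- a)"
    and term_strict: "a \<noteq> 0 \<Longrightarrow> c i * D (d $ i - s * a) * (- a) < c i * D (d $ i - t * a) * (- a)"
    if st: "s < t" for s t a i
  proof -
    have ci: "c i > 0" using cpos by blast
    have key: "a \<noteq> 0 \<Longrightarrow> D (d $ i - s * a) * (- a) < D (d $ i - t * a) * (- a)"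
    proof -
      assume a0: "a \<noteq> 0"
      show ?thesis
      proof (cases "a > 0")
        case True
        hence "d $ i - t * a < d $ i - s * a" using st by simp
        hence "D (d $ i - t * a) < D (d $ i - s * a)" using Dm by blast
        thus ?thesis using True by (simp add: mult_strict_right_mono_neg)
      next
        case False
        hence an: "a < 0" using a0 by simp
        hence "d $ i - s * a < d $ i - t * a" using st by (simp add: mult_strict_right_mono_neg)
        hence "D (d $ i - s * a) < D (d $ i - t * a)" using Dm by blast
        thus ?thesis using an by (simp add: mult_strict_right_mono)
      qed
    qed
    show "a \<noteq> 0 \<Longrightarrow> c i * D (d $ i - s * a) * (- a) < c i * D (d $ i - t * a) * (- a)"
      using key ci by (simp add: mult.assoc)
    show "c i * D (d $ i - s * a) * (- a) \<le> c i * D (d $ i - t * a) * (- a)"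
      using key ci by (cases "a = 0") (auto simp: mult.assoc less_imp_le)
  qed
  have Fm: "\<forall>s t. s < t \<longrightarrow> F x s \<le> F x t" for x
    unfolding F_def by (intro allI impI sum_mono add_right_mono term_mono)
  have Fs: "\<forall>s t. s < t \<longrightarrow> F x s < F x t" if "C $ j \<bullet> x \<noteq> 0" for x j
    unfolding F_def
  proof (intro allI impI sum_strict_mono_ex1)
    fix s t :: real assume st: "s < t"
    show "\<forall>i\<in>UNIV. c i * D (d $ i - s * (C $ i \<bullet> x)) * - (C $ i \<bullet> x) + g i * (C $ i \<bullet> x)
       \<le> c i * D (d $ i - t * (C $ i \<bullet> x)) * - (C $ i \<bullet> x) + g i * (C $ i \<bullet> x)"
      using st by (intro ballI add_right_mono term_mono)
    show "\<exists>i\<in>UNIV. c i * D (d $ i - s * (C $ i \<bullet> x)) * - (C $ i \<bullet> x) + g i * (C $ i \<bullet> x)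
       < c i * D (d $ i - t * (C $ i \<bullet> x)) * - (C $ i \<bullet> x) + g i * (C $ i \<bullet> x)"
      using st that by (intro bexI[of _ j] add_strict_right_mono term_strict) auto
  qed simp
  have nonneg: "Bf y \<ge> 0" for y
    using line_mono[of "\<lambda>t. Bf (t *\<^sub>R y)" "F y" 0 1] fd F0 Fm B0 by simp
  have bdd: "bdd_below (Bf ` A)" for A
    by (rule bdd_belowI[of _ 0]) (use nonneg in blast)
  show ?thesis
  proof
    fix x assume "x \<in> {x. Bf x \<le> bar_beta C d Bf}"
    hence xb: "Bf x \<le> bar_beta C d Bf" by simp
    show "x \<in> polytope C d"
    proof (rule ccontr)
      assume "x \<notin> polytope C d"
      then obtain j where j: "C $ j \<bullet> x > d $ j" unfolding polytope_def by (auto simp: not_le)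
      define S where "S = {i. C $ i \<bullet> x > 0}"
      have "d $ j > 0" using dpos by blast
      hence jS: "j \<in> S" using j unfolding S_def by simp
      define T where "T = (\<lambda>i. d $ i / (C $ i \<bullet> x)) ` S"
      have Tf: "finite T" "T \<noteq> {}" unfolding T_def using jS by auto
      define ts where "ts = Min T"
      obtain i0 where i0: "i0 \<in> S" "ts = d $ i0 / (C $ i0 \<bullet> x)"
        using Min_in[OF Tf] unfolding ts_def T_def by auto
      have tsle: "ts \<le> d $ i / (C $ i \<bullet> x)" if "i \<in> S" for i
        unfolding ts_def T_def using Tf that by (auto simp: T_def)
      have ts0: "ts > 0" using i0 dpos unfolding S_def by simp
      have ts1: "ts < 1"
      proof -
        have "d $ j / (C $ j \<bullet> x) < 1" using j jS unfolding S_def by simp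
        thus ?thesis using tsle[OF jS] by simp
      qed
      have "C $ i0 \<bullet> (ts *\<^sub>R x) = d $ i0" using i0 unfolding S_def by simp
      hence mem: "ts *\<^sub>R x \<in> {x. \<exists>i. C $ i \<bullet> x = d $ i}" by blast
      have "bar_beta C d Bf \<le> Bf (ts *\<^sub>R x)"
        unfolding bar_beta_def by (rule cINF_lower[OF bdd mem])
      also have "Bf (ts *\<^sub>R x) < Bf (1 *\<^sub>R x)"
      proof (rule line_strict[of "\<lambda>t. Bf (t *\<^sub>R x)" "F x" ts 1])
        show "\<forall>t. ((\<lambda>t. Bf (t *\<^sub>R x)) has_real_derivative F x t) (at t)" using fd by blast
        show "F x 0 = 0" by (rule F0)
        have "C $ j \<bullet> x \<noteq> 0" using jS unfolding S_def by simp
        thus "\<forall>s t. s < t \<longrightarrow> F x s < F x t" by (rule Fs)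
        show "0 \<le> ts" using ts0 by simp
        show "ts < 1" by (rule ts1)
      qed
      finally show False using xb by simp
    qed
  qed
qed


theorem lemma1:
  fixes \<delta> :: real and \<beta> :: "real \<Rightarrow> real"
    and Cx :: "real^'n::finite^'qx::finite" and dx :: "real^'qx"
    and Cu :: "real^'m::finite^'qu::finite" and du :: "real^'qu"
    and Bx :: "real^'n \<Rightarrow> real" and Bu :: "real^'m \<Rightarrow> real"
    and \<phi> :: "real^'n \<Rightarrow> real"
    and A :: "real^'n^'n" and B :: "real^'m^'n" and K :: "real^'n^'m"
  assumes "0 < \<delta>" and "\<delta> \<le> 1" and "relaxing_fn \<beta> \<delta>"
    and "\<forall>i. dx $ i > 0" and "\<forall>j. du $ j > 0"
    and "compact (polytope Cx dx)" and "compact (polytope Cu du)"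
    and "relaxed_recentered_barrier \<beta> \<delta> Cx dx Bx"
    and "relaxed_recentered_barrier \<beta> \<delta> Cu du Bu"
    and "Bx 0 = 0" and "Bu 0 = 0"
    and "(Bx has_derivative (\<lambda>h. 0)) (at 0)"
    and "(Bu has_derivative (\<lambda>h. 0)) (at 0)"
    and "\<forall>x. \<phi> x \<ge> 0" and "\<phi> 0 = 0" and "\<forall>x. x \<noteq> 0 \<longrightarrow> \<phi> x > 0"
    and "convex_on UNIV \<phi>"
    and "\<exists>g. (\<forall>x. (\<phi> has_derivative (\<lambda>h. g x \<bullet> h)) (at x)) \<and> continuous_on UNIV g"
    and "\<forall>x. \<phi> x \<le> 1 \<longrightarrow> \<phi> ((A + B ** K) *v x) \<le> \<phi> x"
  shows "{x. Bx x \<le> bar_beta Cx dx Bx} \<subseteq> polytope Cx dx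
       \<and> {u. Bu u \<le> bar_beta Cu du Bu} \<subseteq> polytope Cu du
       \<and> {x. hatB \<beta> \<delta> (1 - \<phi> x) \<le> \<beta> 0} \<subseteq> {x. \<phi> x \<le> 1}"
proof -
  note as = assms
  obtain b' where b': "\<forall>z. (\<beta> has_real_derivative b' z) (at z)" "\<beta> \<delta> = - ln \<delta>" "b' \<delta> = -1/\<delta>"
     "\<forall>y z. y < z \<longrightarrow> z \<le> \<delta> \<longrightarrow> b' y < b' z"
    using relax_props[OF assms(1,3)] by blast
  define D where "D = (\<lambda>z. if \<delta> < z then -1/z else b' z)"
  have hD: "\<forall>z. (hatB \<beta> \<delta> has_real_derivative D z) (at z)" and Dm: "\<forall>y z. y < z \<longrightarrow> D y < D z"
    using hatB_props[OF assms(1) b'] unfolding D_def by blast+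
  have P1: "{x. Bx x \<le> bar_beta Cx dx Bx} \<subseteq> polytope Cx dx"
  proof -
    obtain c e g where ceg: "\<forall>i. c i > (0::real)"
      "\<forall>y. Bx y = (\<Sum>i\<in>UNIV. c i * hatB \<beta> \<delta> (dx $ i - Cx $ i \<bullet> y) + e i + g i * (Cx $ i \<bullet> y))"
      using barrier_form[OF assms(8)] by blast
    show ?thesis by (rule sublevel[OF assms(4) ceg hD Dm assms(10,12)])
  qed
  have P2: "{u. Bu u \<le> bar_beta Cu du Bu} \<subseteq> polytope Cu du"
  proof -
    obtain c e g where ceg: "\<forall>i. c i > (0::real)"
      "\<forall>y. Bu y = (\<Sum>i\<in>UNIV. c i * hatB \<beta> \<delta> (du $ i - Cu $ i \<bullet> y) + e i + g i * (Cu $ i \<bullet> y))"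
      using barrier_form[OF assms(9)] by blast
    show ?thesis by (rule sublevel[OF assms(5) ceg hD Dm assms(11,13)])
  qed
  have P3: "{x. hatB \<beta> \<delta> (1 - \<phi> x) \<le> \<beta> 0} \<subseteq> {x. \<phi> x \<le> 1}"
  proof
    fix x assume "x \<in> {x. hatB \<beta> \<delta> (1 - \<phi> x) \<le> \<beta> 0}"
    hence hx: "hatB \<beta> \<delta> (1 - \<phi> x) \<le> \<beta> 0" by simp
    show "x \<in> {x. \<phi> x \<le> 1}"
    proof (rule ccontr)
      assume "x \<notin> {x. \<phi> x \<le> 1}"
      hence z0: "1 - \<phi> x < 0" by simp
      hence "hatB \<beta> \<delta> (1 - \<phi> x) = \<beta> (1 - \<phi> x)" using assms(1) unfolding hatB_def by simp
      moreover have "\<beta> (1 - \<phi> x) > \<beta> 0"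
      proof (rule DERIV_neg_imp_decreasing[OF z0])
        fix y :: real assume "1 - \<phi> x \<le> y" "y \<le> 0"
        hence "y < \<delta>" using assms(1) by simp
        hence "b' y < b' \<delta>" using b'(4) by blast
        hence "b' y < -1/\<delta>" using b'(3) by simp
        also have "-1/\<delta> < 0" using assms(1) by simp
        finally show "\<exists>d. (\<beta> has_real_derivative d) (at y) \<and> d < 0" using b'(1) by blast
      qed
      ultimately show False using hx by simp
    qed
  qed
  show ?thesis using P1 P2 P3 by blast
qed

end
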